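(* In the single-period model described in the context, with short sales prohibitions (admissible strategies $h=(h_0,\dots,h_M)$ satisfy $h_0\in\mathbb{R}$ arbitrary and $h_m\ge 0$ for $m=1,\dots,M$), there is no arbitrage under model uncertainty if and only if there exists a probability measure $Q$ on $\Omega$ with $Q(\omega)>0$ for all $\omega\in\Omega$ and $E_Q[\Delta S_m^*]\le 0$ for all $m=1,\dots,M$.
   Context: Single-period model: $\Omega=\{\omega_1,\dots,\omega_K\}$ is a finite sample space with all subsets measurable. $\mathcal{P}$ is a nonempty family of probability measures on $\Omega$ with $\sup_{P\in\mathcal{P}}P(\omega)>0$ for every $\omega\in\Omega$. There is a bond with $S_0(0)=1$, $S_0(1)=1+r$, $r\ge 0$ a constant, and $M$ risky securities with known initial prices $S_m(0)>0$ and random terminal prices $S_m(1):\Omega\to\mathbb{R}$, $m=1,\dots,M$. Discounted prices: $S_m^*(t)=S_m(t)/S_0(t)$, $t=0,1$, and $\Delta S_m^*=S_m^*(1)-S_m^*(0)$. For a trading strategy $h=(h_0,\dots,h_M)$, the discounted portfolio value is $V_t^*=h_0+\sum_{m=1}^M h_m S_m^*(t)$, $t=0,1$. A trading strategy is an arbitrage under model uncertainty if (i) $V_0^*=0$ and (ii) $V_1^*(\omega)\ge 0$ for all $\omega\in\Omega$ and $\sup_{P\in\mathcal{P}}E_P[V_1^*]>0$. "No arbitrage under model uncertainty" means no admissible trading strategy is an arbitrage under model uncertainty. *)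

theory Defs
  imports Main "HOL-Library.Extended_Real" Complex_Main
begin

text \<open>Finite sample space: the universe of a finite type 'w (all subsets measurable).
A probability measure on it is given by its point masses.\<close>

definition prob_fun :: "('w::finite \<Rightarrow> real) \<Rightarrow> bool" where
  "prob_fun P \<longleftrightarrow> (\<forall>w. 0 \<le> P w) \<and> (\<Sum>w\<in>UNIV. P w) = 1"

definition expect :: "('w::finite \<Rightarrow> real) \<Rightarrow> ('w \<Rightarrow> real) \<Rightarrow> real" where
  "expect P X = (\<Sum>w\<in>UNIV. P w * X w)"

text \<open>Discounted prices: bond S_0(0)=1, S_0(1)=1+r; risky prices S0 m, S1 m w for m = 1..M.\<close>

definition disc_V0 :: "nat \<Rightarrow> (nat \<Rightarrow> real) \<Rightarrow> real \<Rightarrow> (nat \<Rightarrow> real) \<Rightarrow> real" where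
  "disc_V0 M S0 h0 h = h0 + (\<Sum>m=1..M. h m * S0 m)"

definition disc_V1 :: "nat \<Rightarrow> real \<Rightarrow> (nat \<Rightarrow> 'w \<Rightarrow> real) \<Rightarrow> real \<Rightarrow> (nat \<Rightarrow> real) \<Rightarrow> 'w \<Rightarrow> real" where
  "disc_V1 M r S1 h0 h w = h0 + (\<Sum>m=1..M. h m * (S1 m w / (1 + r)))"

definition delta_disc :: "real \<Rightarrow> (nat \<Rightarrow> real) \<Rightarrow> (nat \<Rightarrow> 'w \<Rightarrow> real) \<Rightarrow> nat \<Rightarrow> 'w \<Rightarrow> real" where
  "delta_disc r S0 S1 m w = S1 m w / (1 + r) - S0 m"

definition admissible_ns :: "nat \<Rightarrow> (nat \<Rightarrow> real) \<Rightarrow> bool" where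
  "admissible_ns M h \<longleftrightarrow> (\<forall>m\<in>{1..M}. 0 \<le> h m)"

definition arbitrage_mu ::
  "('w::finite \<Rightarrow> real) set \<Rightarrow> nat \<Rightarrow> real \<Rightarrow> (nat \<Rightarrow> real) \<Rightarrow> (nat \<Rightarrow> 'w \<Rightarrow> real)
     \<Rightarrow> real \<Rightarrow> (nat \<Rightarrow> real) \<Rightarrow> bool" where
  "arbitrage_mu Ps M r S0 S1 h0 h \<longleftrightarrow>
     disc_V0 M S0 h0 h = 0 \<and>
     (\<forall>w. 0 \<le> disc_V1 M r S1 h0 h w) \<and>
     (SUP P\<in>Ps. expect P (disc_V1 M r S1 h0 h)) > 0"

definition no_arbitrage_mu_ns ::
  "('w::finite \<Rightarrow> real) set \<Rightarrow> nat \<Rightarrow> real \<Rightarrow> (nat \<Rightarrow> real) \<Rightarrow> (nat \<Rightarrow> 'w \<Rightarrow> real) \<Rightarrow> bool" where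
  "no_arbitrage_mu_ns Ps M r S0 S1 \<longleftrightarrow>
     \<not> (\<exists>h0 h. admissible_ns M h \<and> arbitrage_mu Ps M r S0 S1 h0 h)"

end

theory Submission
  imports Defs "HOL-Analysis.Analysis"
begin

lemma vec_sum_nth: "(sum f S) $ i = (\<Sum>x\<in>S. (f x) $ i)"
  by (subst sum_eq) simp

lemma stiemke:
  fixes c :: "nat \<Rightarrow> real^'w::finite"
  assumes H: "\<And>h. (\<forall>m\<in>{1..M}. 0 \<le> h m) \<Longrightarrow> (\<forall>w. 0 \<le> (\<Sum>m=1..M. h m *\<^sub>R c m) $ w)
      \<Longrightarrow> (\<Sum>m=1..M. h m *\<^sub>R c m) = 0"
  shows "\<exists>y::real^'w. (\<forall>w. y$w > 0) \<and> (\<forall>m\<in>{1..M}. y \<bullet> c m \<le> 0)"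
proof -
  define K where "K = {x. \<exists>h. (\<forall>m\<in>{1..M}. 0 \<le> h m) \<and> x = (\<Sum>m=1..M. h m *\<^sub>R c m)}"
  define P where "P = convex hull (insert 0 (c ` {1..M}))"
  define C where "C = conic hull P"
  have Kconv: "convex K"
    unfolding convex_def
  proof (intro ballI allI impI)
    fix x y and u v :: real
    assume "x \<in> K" "y \<in> K" "0 \<le> u" "0 \<le> v" "u + v = 1"
    then obtain h g where h: "\<forall>m\<in>{1..M}. 0 \<le> h m" "x = (\<Sum>m=1..M. h m *\<^sub>R c m)"
      and g: "\<forall>m\<in>{1..M}. 0 \<le> g m" "y = (\<Sum>m=1..M. g m *\<^sub>R c m)"
      unfolding K_def by blast
    have "u *\<^sub>R x + v *\<^sub>R y = (\<Sum>m=1..M. (u * h m + v * g m) *\<^sub>R c m)"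
      by (simp add: h g scaleR_sum_right sum.distrib scaleR_add_left)
    moreover have "\<forall>m\<in>{1..M}. 0 \<le> u * h m + v * g m"
      using h g \<open>0 \<le> u\<close> \<open>0 \<le> v\<close> by simp
    ultimately show "u *\<^sub>R x + v *\<^sub>R y \<in> K" unfolding K_def
      by (intro CollectI exI[of _ "\<lambda>m. u * h m + v * g m"] conjI) auto
  qed
  have Kcone: "conic K"
    unfolding conic_def
  proof (intro allI impI)
    fix x and t :: real
    assume "x \<in> K" "0 \<le> t"
    then obtain h where h: "\<forall>m\<in>{1..M}. 0 \<le> h m" "x = (\<Sum>m=1..M. h m *\<^sub>R c m)"
      unfolding K_def by blast
    have "t *\<^sub>R x = (\<Sum>m=1..M. (t * h m) *\<^sub>R c m)"
      by (simp add: h scaleR_sum_right)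
    moreover have "\<forall>m\<in>{1..M}. 0 \<le> t * h m" using h \<open>0 \<le> t\<close> by simp
    ultimately show "t *\<^sub>R x \<in> K" unfolding K_def
      by (intro CollectI exI[of _ "\<lambda>m. t * h m"] conjI) auto
  qed
  have cK: "c m \<in> K" if "m \<in> {1..M}" for m
  proof -
    have "(\<Sum>k=1..M. (if k = m then 1 else 0) *\<^sub>R c k) = c m"
    proof -
      have "(\<lambda>k. (if k = m then 1 else 0) *\<^sub>R c k) = (\<lambda>k. if k = m then c k else 0)"
        by auto
      then have "(\<Sum>k=1..M. (if k = m then 1 else 0) *\<^sub>R c k) = (\<Sum>k=1..M. if k = m then c k else 0)"
        by (rule arg_cong)
      also have "\<dots> = c m" using that by (subst sum.delta) auto
      finally show ?thesis .
    qed
    then show ?thesis unfolding K_def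
      by (rule_tac CollectI, rule_tac x="\<lambda>k. if k = m then 1 else 0" in exI) auto
  qed
  have "0 \<in> K" unfolding K_def by (rule CollectI, rule exI[of _ "\<lambda>k. 0"]) auto
  have PK: "P \<subseteq> K" unfolding P_def
    using cK \<open>0 \<in> K\<close> Kconv by (intro hull_minimal) auto
  have CK: "C \<subseteq> K" unfolding C_def
    using PK Kcone by (intro hull_minimal) auto
  have "polytope P" unfolding P_def by (rule polytope_convex_hull) simp
  then have Ccl: "closed C" unfolding C_def using closed_conic_hull_strong by blast
  have Ccv: "convex C" unfolding C_def P_def by (intro convex_conic_hull convex_convex_hull)
  have PC: "P \<subseteq> C" unfolding C_def by (rule hull_subset)
  have "0 \<in> P" unfolding P_def by (rule hull_inc) simp
  then have "0 \<in> C" using PC by blast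
  have cC: "c m \<in> C" if "m \<in> {1..M}" for m
  proof -
    have "c m \<in> insert 0 (c ` {1..M})" using that by blast
    then have "c m \<in> P" unfolding P_def by (rule hull_inc)
    then show ?thesis using PC by blast
  qed
  define T where "T = convex hull (range (\<lambda>w. axis w (1::real) :: real^'w))"
  have Tc: "compact T" unfolding T_def by (intro compact_convex_hull finite_imp_compact) simp
  have Tv: "convex T" unfolding T_def by simp
  have axT: "axis w 1 \<in> T" for w unfolding T_def by (rule hull_inc) simp
  then have Tne: "T \<noteq> {}" by blast
  define D where "D = {x::real^'w. (\<forall>i. 0 \<le> x$i) \<and> (\<Sum>i\<in>UNIV. x$i) = 1}"
  have Dconv: "convex D"
    unfolding convex_def D_def
  proof (intro ballI allI impI CollectI conjI)
    fix x y :: "real^'w" and u v :: real and i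
    assume as: "x \<in> {x. (\<forall>i. 0 \<le> x $ i) \<and> (\<Sum>i\<in>UNIV. x $ i) = 1}"
      "y \<in> {x. (\<forall>i. 0 \<le> x $ i) \<and> (\<Sum>i\<in>UNIV. x $ i) = 1}" "0 \<le> u" "0 \<le> v" "u + v = 1"
    then show "0 \<le> (u *\<^sub>R x + v *\<^sub>R y) $ i" by simp
    show "(\<Sum>i\<in>UNIV. (u *\<^sub>R x + v *\<^sub>R y) $ i) = 1"
      using as by (simp add: sum.distrib sum_distrib_left[symmetric])
  qed
  have "axis w 1 \<in> D" for w
    unfolding D_def by (simp add: axis_def)
  then have TD: "T \<subseteq> D" unfolding T_def using Dconv by (intro hull_minimal) auto
  have disj: "T \<inter> C = {}"
  proof (rule ccontr)
    assume "T \<inter> C \<noteq> {}"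
    then obtain x where "x \<in> D" "x \<in> K" using TD CK by blast
    then obtain h where h: "\<forall>m\<in>{1..M}. 0 \<le> h m" "x = (\<Sum>m=1..M. h m *\<^sub>R c m)"
      and xD: "\<forall>i. 0 \<le> x$i" "(\<Sum>i\<in>UNIV. x$i) = 1"
      unfolding K_def D_def by blast
    have "x = 0" using H[OF h(1)] h(2) xD(1) by simp
    then show False using xD(2) by simp
  qed
  obtain a b where ab: "\<forall>x\<in>T. a \<bullet> x < b" "\<forall>x\<in>C. a \<bullet> x > b"
    using separating_hyperplane_compact_closed[OF Tv Tc Tne Ccv Ccl disj] by blast
  have b0: "b < 0" using ab(2) \<open>0 \<in> C\<close> by (metis inner_zero_right)
  have Cnn: "a \<bullet> x \<ge> 0" if "x \<in> C" for x
  proof (rule ccontr)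
    assume "\<not> a \<bullet> x \<ge> 0"
    then have neg: "a \<bullet> x < 0" by simp
    define t where "t = b / (a \<bullet> x)"
    have "t \<ge> 0" unfolding t_def using neg b0 by (simp add: divide_nonpos_neg)
    then have "t *\<^sub>R x \<in> C" using that conic_conic_hull[of P] unfolding C_def by (meson conicD)
    then have "a \<bullet> (t *\<^sub>R x) > b" using ab(2) by blast
    moreover have "a \<bullet> (t *\<^sub>R x) = b" unfolding t_def using neg by simp
    ultimately show False by simp
  qed
  show ?thesis
  proof (rule exI[of _ "-a"], intro conjI allI ballI)
    fix w
    have "a \<bullet> axis w 1 < b" using ab(1) axT by blast
    then show "(-a) $ w > 0" using b0 by (simp add: inner_axis)
  next
    fix m assume "m \<in> {1..M}"
    then show "(-a) \<bullet> c m \<le> 0" using Cnn cC by simp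
  qed
qed


lemma V1_eq:
  assumes "disc_V0 M S0 h0 h = 0"
  shows "disc_V1 M r S1 h0 h w = (\<Sum>m=1..M. h m * delta_disc r S0 S1 m w)"
proof -
  have "h0 = - (\<Sum>m=1..M. h m * S0 m)" using assms unfolding disc_V0_def by linarith
  then show ?thesis unfolding disc_V1_def delta_disc_def by (simp add: right_diff_distrib sum_subtractf)
qed

theorem mainTheorem2:
  fixes Ps :: "('w::finite \<Rightarrow> real) set"
    and M :: nat and r :: real
    and S0 :: "nat \<Rightarrow> real" and S1 :: "nat \<Rightarrow> 'w \<Rightarrow> real"
  assumes "Ps \<noteq> {}"
    and "\<forall>P\<in>Ps. prob_fun P"
    and "\<forall>w. (SUP P\<in>Ps. P w) > 0"
    and "r \<ge> 0"
    and "\<forall>m\<in>{1..M}. S0 m > 0"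
  shows "no_arbitrage_mu_ns Ps M r S0 S1 \<longleftrightarrow>
    (\<exists>Q. prob_fun Q \<and> (\<forall>w. Q w > 0) \<and>
         (\<forall>m\<in>{1..M}. expect Q (delta_disc r S0 S1 m) \<le> 0))"
proof
  assume na: "no_arbitrage_mu_ns Ps M r S0 S1"
  define c :: "nat \<Rightarrow> real^'w" where "c m = (\<chi> w. delta_disc r S0 S1 m w)" for m
  have H: "(\<Sum>m=1..M. h m *\<^sub>R c m) = 0"
    if h: "\<forall>m\<in>{1..M}. 0 \<le> h m" and hnn: "\<forall>w. 0 \<le> (\<Sum>m=1..M. h m *\<^sub>R c m) $ w" for h
  proof (rule ccontr)
    assume nz: "(\<Sum>m=1..M. h m *\<^sub>R c m) \<noteq> 0"
    define h0 where "h0 = - (\<Sum>m=1..M. h m * S0 m)"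
    have V0: "disc_V0 M S0 h0 h = 0" by (simp add: disc_V0_def h0_def)
    define V where "V = disc_V1 M r S1 h0 h"
    have V: "V w = (\<Sum>m=1..M. h m *\<^sub>R c m) $ w" for w
      using V1_eq[OF V0] by (simp add: V_def vec_sum_nth c_def)
    have Vnn: "\<forall>w. 0 \<le> V w" using V hnn by simp
    have "\<exists>w. (\<Sum>m=1..M. h m *\<^sub>R c m) $ w \<noteq> 0"
    proof (rule ccontr)
      assume "\<not> (\<exists>w. (\<Sum>m=1..M. h m *\<^sub>R c m) $ w \<noteq> 0)"
      then have "(\<Sum>m=1..M. h m *\<^sub>R c m) = 0" by (simp add: vec_eq_iff)
      then show False using nz by simp
    qed
    then obtain w where "(\<Sum>m=1..M. h m *\<^sub>R c m) $ w \<noteq> 0" by blast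
    then have "V w \<noteq> 0" using V by simp
    moreover have "V w \<ge> 0" using Vnn by simp
    ultimately have Vw: "V w > 0" by linarith
    obtain P where P: "P \<in> Ps" "P w > 0"
    proof (rule ccontr)
      assume "\<not> thesis"
      then have "\<forall>P\<in>Ps. P w \<le> 0" using that by force
      then have "(SUP P\<in>Ps. P w) \<le> 0" using assms(1) by (intro cSUP_least) auto
      then show False using assms(3) by (meson not_le)
    qed
    have "P w * V w \<le> expect P V"
      unfolding expect_def
      using assms(2) P(1) Vnn by (intro member_le_sum) (auto simp: prob_fun_def)
    moreover have "P w * V w > 0" using P Vw by simp
    ultimately have Epos: "expect P V > 0" by linarith
    have le1: "Q v \<le> 1" if "Q \<in> Ps" for Q v
    proof -
      have "Q v \<le> (\<Sum>u\<in>UNIV. Q u)"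
        using assms(2) that by (intro member_le_sum) (auto simp: prob_fun_def)
      then show ?thesis using assms(2) that by (simp add: prob_fun_def)
    qed
    have "bdd_above ((\<lambda>Q. expect Q V) ` Ps)"
    proof (rule bdd_aboveI2[where M="\<Sum>u\<in>UNIV. V u"])
      fix Q assume "Q \<in> Ps"
      then show "expect Q V \<le> (\<Sum>u\<in>UNIV. V u)"
        unfolding expect_def using le1 Vnn assms(2)
        by (intro sum_mono) (simp add: mult_left_le_one_le prob_fun_def)
    qed
    then have "expect P V \<le> (SUP Q\<in>Ps. expect Q V)" using P(1) by (rule cSUP_upper2) simp
    then have "arbitrage_mu Ps M r S0 S1 h0 h"
      unfolding arbitrage_mu_def using V0 Vnn Epos by (simp add: V_def)
    moreover have "admissible_ns M h" unfolding admissible_ns_def using h by simp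
    ultimately show False using na unfolding no_arbitrage_mu_ns_def by blast
  qed
  obtain y :: "real^'w" where y: "\<forall>w. y$w > 0" "\<forall>m\<in>{1..M}. y \<bullet> c m \<le> 0"
    using stiemke[of M c] H by blast
  define s where "s = (\<Sum>w\<in>UNIV. y$w)"
  have s: "s > 0" unfolding s_def using y(1) by (intro sum_pos) auto
  define Q where "Q w = y$w / s" for w
  have "prob_fun Q" unfolding prob_fun_def Q_def
    using s y(1) by (auto simp: sum_divide_distrib[symmetric] s_def[symmetric] less_imp_le)
  moreover have "\<forall>w. Q w > 0" unfolding Q_def using s y(1) by simp
  moreover have "expect Q (delta_disc r S0 S1 m) \<le> 0" if "m \<in> {1..M}" for m
  proof -
    have "expect Q (delta_disc r S0 S1 m) = (y \<bullet> c m) / s"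
      unfolding expect_def Q_def inner_vec_def c_def
      by (simp add: sum_divide_distrib)
    then show ?thesis using y(2) that s by (simp add: divide_nonpos_pos)
  qed
  ultimately show "\<exists>Q. prob_fun Q \<and> (\<forall>w. Q w > 0) \<and>
         (\<forall>m\<in>{1..M}. expect Q (delta_disc r S0 S1 m) \<le> 0)" by blast
next
  assume "\<exists>Q. prob_fun Q \<and> (\<forall>w. Q w > 0) \<and>
         (\<forall>m\<in>{1..M}. expect Q (delta_disc r S0 S1 m) \<le> 0)"
  then obtain Q where Q: "prob_fun Q" "\<forall>w. Q w > 0"
    "\<forall>m\<in>{1..M}. expect Q (delta_disc r S0 S1 m) \<le> 0" by blast
  show "no_arbitrage_mu_ns Ps M r S0 S1"
    unfolding no_arbitrage_mu_ns_def
  proof (intro notI, elim exE conjE)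
    fix h0 h assume adm: "admissible_ns M h" and arb: "arbitrage_mu Ps M r S0 S1 h0 h"
    define V where "V = disc_V1 M r S1 h0 h"
    have V0: "disc_V0 M S0 h0 h = 0" and Vnn: "\<forall>w. 0 \<le> V w"
      and sp: "(SUP P\<in>Ps. expect P V) > 0"
      using arb unfolding arbitrage_mu_def V_def by auto
    have V: "V w = (\<Sum>m=1..M. h m * delta_disc r S0 S1 m w)" for w
      using V1_eq[OF V0] by (simp add: V_def)
    have "expect Q V = (\<Sum>w\<in>UNIV. \<Sum>m=1..M. Q w * (h m * delta_disc r S0 S1 m w))"
      unfolding expect_def V by (simp add: sum_distrib_left)
    also have "\<dots> = (\<Sum>m=1..M. \<Sum>w\<in>UNIV. Q w * (h m * delta_disc r S0 S1 m w))"
      by (rule sum.swap)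
    also have "\<dots> = (\<Sum>m=1..M. h m * expect Q (delta_disc r S0 S1 m))"
      unfolding expect_def by (simp add: sum_distrib_left mult.left_commute)
    also have "\<dots> \<le> 0"
      using adm Q(3) unfolding admissible_ns_def
      by (intro sum_nonpos) (simp add: mult_nonneg_nonpos)
    finally have "expect Q V \<le> 0" .
    moreover have "\<forall>w\<in>UNIV. 0 \<le> Q w * V w" using Q(2) Vnn by (simp add: less_imp_le)
    moreover have "expect Q V \<ge> 0" unfolding expect_def using Q(2) Vnn
      by (intro sum_nonneg) (simp add: less_imp_le)
    ultimately have "(\<Sum>w\<in>UNIV. Q w * V w) = 0" unfolding expect_def by linarith
    then have "\<forall>w\<in>UNIV. Q w * V w = 0"
      using sum_nonneg_eq_0_iff[of UNIV "\<lambda>w. Q w * V w"] \<open>\<forall>w\<in>UNIV. 0 \<le> Q w * V w\<close> by simp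
    then have "\<forall>w. V w = 0" using Q(2) by (simp add: less_imp_neq[symmetric])
    then have "\<forall>P. expect P V = 0" by (simp add: expect_def)
    then have "(SUP P\<in>Ps. expect P V) = 0" using assms(1) by simp
    then show False using sp by simp
  qed
qed

end
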